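(* Let $(X,\rho)$ be a symmetric quandle, $Y$ an $(X,\rho)$-set, $A$ an abelian group, and $\theta$ a $2$-cocycle of $C^*_{{\rm Q},\rho}(X,A)_Y$. Let $D$ be a diagram of an unoriented link in $\mathbb{R}^3$, and let $D^+$ be the diagram $D$ equipped with an arbitrary orientation. Then $\Phi_\theta(D)=\Phi^{\rm ori}_\theta(D^+)$ as multi-sets.
   Context: A quandle is a set $X$ with a binary operation $(x,y)\mapsto x^y$ such that $x^x=x$ for all $x$; for all $x,y$ there is a unique $z$ with $z^y=x$ (written $z=x^{y^{-1}}$); and $(x^y)^z=(x^z)^{(y^z)}$ for all $x,y,z$. A good involution of $X$ is a map $\rho:X\to X$ with $\rho\circ\rho={\rm id}$, $\rho(x^y)=\rho(x)^y$ and $x^{\rho(y)}=x^{y^{-1}}$ for all $x,y$; the pair $(X,\rho)$ is a symmetric quandle. Its associated group $G_{(X,\rho)}$ is the group with generators the elements of $X$ and relations $x^y=y^{-1}xy$ and $\rho(x)=x^{-1}$ ($x,y\in X$). An $(X,\rho)$-set is a set $Y$ with a right action of $G_{(X,\rho)}$; for $y\in Y$, $x\in X$ write $y^x$ for the action of (the image of) $x$, and $y^{x_1x_2}=(y^{x_1})^{x_2}$. Since $G_{(X,\rho)}$ is a quotient of the group $G_X=\langle X\mid x^y=y^{-1}xy\rangle$, $Y$ is also a right $G_X$-set. Chain complexes: for $n\ge1$ let $C_n(X)_Y$ be the free abelian group on $Y\times X^n$, $C_0(X)_Y$ the free abelian group on $Y$, and $C_n(X)_Y=0$ for $n<0$,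 with $\partial_n(y,x_1,\dots,x_n)=\sum_{i=1}^n(-1)^i\{(y,x_1,\dots,\widehat{x_i},\dots,x_n)-(y^{x_i},x_1^{x_i},\dots,x_{i-1}^{x_i},\widehat{x_i},x_{i+1},\dots,x_n)\}$ for $n\ge1$ and $\partial_n=0$ otherwise. Let $D^{\rm Q}_n(X)_Y$ be generated by the $(y,x_1,\dots,x_n)$ with $x_i=x_{i+1}$ for some $i$, and $D^\rho_n(X)_Y$ by the elements $(y,x_1,\dots,x_n)+(y^{x_i},x_1^{x_i},\dots,x_{i-1}^{x_i},\rho(x_i),x_{i+1},\dots,x_n)$, $1\le i\le n$. These are subcomplexes; set $C^{\rm Q}_*(X)_Y=C_*(X)_Y/D^{\rm Q}_*(X)_Y$ and $C^{{\rm Q},\rho}_*(X)_Y=C_*(X)_Y/(D^{\rm Q}_*(X)_Y+D^\rho_*(X)_Y)$, and for an abelian group $A$ let $C^*_{\rm Q}(X,A)_Y={\rm Hom}(C^{\rm Q}_*(X)_Y,A)$ and $C^*_{{\rm Q},\rho}(X,A)_Y={\rm Hom}(C^{{\rm Q},\rho}_*(X)_Y,A)$. A cocycle of $C^*_{{\rm Q},\rho}(X,A)_Y$ is, via the quotient map, also a cocycle of $C^*_{\rm Q}(X,A)_Y$. Unoriented colorings: for a link diagram $D\subset\mathbb{R}^2$, the semi-arcs are the arcs obtained by cutting the over-arcs of $D$ at the crossings. Assign to each semi-arc a normal orientation and an element of $X$ such that at each crossing: (i) if the two semi-arcs forming the over-arc are labeled $x_1,x_2$, then $x_1=x_2$ when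 their normal orientations are coherent and $x_1=\rho(x_2)$ otherwise; (ii) if the two under semi-arcs $e_1,e_2$ are labeled $x_1,x_2$ and one of the over semi-arcs, labeled $x_3$, has normal orientation pointing from $e_1$ to $e_2$, then $x_1^{x_3}=x_2$ when the normal orientations of $e_1,e_2$ are coherent and $x_1^{x_3}=\rho(x_2)$ otherwise. A basic inversion reverses the normal orientation of one semi-arc and replaces its label $x$ by $\rho(x)$. An $(X,\rho)$-coloring is an equivalence class of such assignments under basic inversions. An $(X,\rho)_Y$-coloring is an $(X,\rho)$-coloring together with an assignment of elements of $Y$ to the complementary regions of $D$ such that whenever a semi-arc labeled $x$ has normal orientation pointing from a region labeled $y_1$ to a region labeled $y_2$, then $y_1^x=y_2$. Weight of a crossing $v$: choose one of the regions $f$ around $v$, with label $y$; let $e_1$ (under) and $e_2$ (over) be the semi-arcs at $v$ facing $f$, with (after basic inversions) normal orientations $n_1,n_2$ pointing away from $f$ and labels $x_1,x_2$; let $\epsilon=+1$ if $(n_2,n_1)$ is a positive basis of $\mathbb{R}^2$ and $-1$ otherwise; the weight is $\epsilon(y,x_1,x_2)$. Put $c_{D,C}=\sum_v(\text{weight of }v)\in C^{{\rm Q},\rho}_2(X)_Y$ (this is independent of the choices), and $\Phi_\theta(D)=\{\theta(c_{D,C})\mid C\text{ an }(X,\rho)_Y\text{-coloring of }D\}$ as a multi-set. Oriented colorings: for an oriented diagram $D^+$, give each semi-arc the normal orientation such that (orientation vector, normal vector) is a positive basis of $\mathbb{R}^2$. An $X_Y$-coloring of $D^+$ assigns elements of $X$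 to semi-arcs and of $Y$ to regions satisfying conditions (i), (ii) and the region condition above with these fixed normal orientations (so no basic inversions are used). The weight of a crossing and the chain $c_{D^+,C}\in C^{\rm Q}_2(X)_Y$ are defined in the same way, and $\Phi^{\rm ori}_\theta(D^+)=\{\theta(c_{D^+,C})\mid C\text{ an }X_Y\text{-coloring of }D^+\}$ as a multi-set. *)

theory Defs
  imports Main "HOL-Library.Equipollence"
begin

text \<open>A quandle is a type 'x with operation qop x y = x^y.\<close>
definition quandle :: "('x \<Rightarrow> 'x \<Rightarrow> 'x) \<Rightarrow> bool" where
  "quandle qop \<longleftrightarrow>
     (\<forall>x. qop x x = x) \<and>
     (\<forall>x y. \<exists>!z. qop z y = x) \<and>
     (\<forall>x y z. qop (qop x y) z = qop (qop x z) (qop y z))"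

text \<open>qinv qop x y is x^(y^-1), the unique z with z^y = x.\<close>
definition qinv :: "('x \<Rightarrow> 'x \<Rightarrow> 'x) \<Rightarrow> 'x \<Rightarrow> 'x \<Rightarrow> 'x" where
  "qinv qop x y = (THE z. qop z y = x)"

definition good_involution :: "('x \<Rightarrow> 'x \<Rightarrow> 'x) \<Rightarrow> ('x \<Rightarrow> 'x) \<Rightarrow> bool" where
  "good_involution qop \<rho> \<longleftrightarrow>
     (\<forall>x. \<rho> (\<rho> x) = x) \<and>
     (\<forall>x y. \<rho> (qop x y) = qop (\<rho> x) y) \<and>
     (\<forall>x y. qop x (\<rho> y) = qinv qop x y)"

definition symmetric_quandle :: "('x \<Rightarrow> 'x \<Rightarrow> 'x) \<Rightarrow> ('x \<Rightarrow> 'x) \<Rightarrow> bool" where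
  "symmetric_quandle qop \<rho> \<longleftrightarrow> quandle qop \<and> good_involution qop \<rho>"

text \<open>An (X,rho)-set: a right action of the group G_(X,rho) = < X | x^y = y^-1 x y, rho(x) = x^-1 >
  on the type 'y, written act y x = y^x.  By the universal property of a group presentation,
  such an action is exactly a family of bijections act(-,x) satisfying the defining relations:
  y^(x^z) = y^(z^-1 x z)  (stated after substituting y := y^z) and y^(rho x) = y^(x^-1).\<close>
definition Xrho_set :: "('x \<Rightarrow> 'x \<Rightarrow> 'x) \<Rightarrow> ('x \<Rightarrow> 'x) \<Rightarrow> ('y \<Rightarrow> 'x \<Rightarrow> 'y) \<Rightarrow> bool" where
  "Xrho_set qop \<rho> act \<longleftrightarrow>
     (\<forall>x. bij (\<lambda>y. act y x)) \<and>
     (\<forall>y x z. act (act y z) (qop x z) = act (act y x) z) \<and>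
     (\<forall>y x. act (act y x) (\<rho> x) = y)"

text \<open>Boundary of a generator (y, x_1, ..., x_n) of C_n(X)_Y, as a list of signed generators
  (True = coefficient +1, False = coefficient -1).  Index i (0-based) corresponds to i+1 in the
  paper, so the sign (-1)^(i+1) is + iff i is odd.\<close>
definition bdry :: "('x \<Rightarrow> 'x \<Rightarrow> 'x) \<Rightarrow> ('y \<Rightarrow> 'x \<Rightarrow> 'y) \<Rightarrow> 'y \<Rightarrow> 'x list
                    \<Rightarrow> (bool \<times> 'y \<times> 'x list) list" where
  "bdry qop act y xs =
     concat (map (\<lambda>i. [ (odd i, y, take i xs @ drop (Suc i) xs),
                        (\<not> odd i, act y (xs ! i),
                           map (\<lambda>x. qop x (xs ! i)) (take i xs) @ drop (Suc i) xs) ])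
             [0..<length xs])"

definition eval_chain :: "('y \<Rightarrow> 'x list \<Rightarrow> 'a::ab_group_add) \<Rightarrow> (bool \<times> 'y \<times> 'x list) list \<Rightarrow> 'a" where
  "eval_chain f c = sum_list (map (\<lambda>(p, y, xs). if p then f y xs else - f y xs) c)"

text \<open>A 2-cochain of C^*_{Q,rho}(X,A)_Y is a homomorphism C_2(X)_Y -> A vanishing on
  D^Q_2 + D^rho_2, i.e. a function theta on generators (y,x1,x2) vanishing on the generators of
  D^Q_2 and D^rho_2.  It is a cocycle iff theta o d_3 vanishes on all generators (y,x1,x2,x3).\<close>
definition two_cocycle_Qrho :: "('x \<Rightarrow> 'x \<Rightarrow> 'x) \<Rightarrow> ('x \<Rightarrow> 'x) \<Rightarrow> ('y \<Rightarrow> 'x \<Rightarrow> 'y)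
                               \<Rightarrow> ('y \<Rightarrow> 'x \<Rightarrow> 'x \<Rightarrow> 'a::ab_group_add) \<Rightarrow> bool" where
  "two_cocycle_Qrho qop \<rho> act \<theta> \<longleftrightarrow>
     (\<forall>y x. \<theta> y x x = 0) \<and>
     (\<forall>y x1 x2. \<theta> y x1 x2 + \<theta> (act y x1) (\<rho> x1) x2 = 0) \<and>
     (\<forall>y x1 x2. \<theta> y x1 x2 + \<theta> (act y x2) (qop x1 x2) (\<rho> x2) = 0) \<and>
     (\<forall>y x1 x2 x3. eval_chain (\<lambda>y' xs. \<theta> y' (xs ! 0) (xs ! 1)) (bdry qop act y [x1, x2, x3]) = 0)"

text \<open>A diagram is encoded by: crossings V, semi-arcs E (each with a fixed reference direction),
  regions F.  At a crossing v the four semi-arc ends are numbered 0,1,2,3 counterclockwise;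
  ends 0,2 belong to the under strand, ends 1,3 to the over strand.  sa v i is the semi-arc
  at end i and inc v i says whether its reference direction points into v.  lreg e / rreg e are
  the regions to the left / right of e w.r.t. its reference direction.\<close>
record ('v, 'e, 'f) diagram =
  crossings :: "'v set"
  arcs :: "'e set"
  regions :: "'f set"
  sa :: "'v \<Rightarrow> nat \<Rightarrow> 'e"
  inc :: "'v \<Rightarrow> nat \<Rightarrow> bool"
  lreg :: "'e \<Rightarrow> 'f"
  rreg :: "'e \<Rightarrow> 'f"

definition nxt :: "nat \<Rightarrow> nat" where "nxt k = Suc k mod 4"

text \<open>Region lying counterclockwise from end k (i.e. between ends k and k+1 mod 4).\<close>
definition corner :: "('v, 'e, 'f, 'z) diagram_scheme \<Rightarrow> 'v \<Rightarrow> nat \<Rightarrow> 'f" where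
  "corner D v k = (if inc D v k then rreg D (sa D v k) else lreg D (sa D v k))"

text \<open>Region lying clockwise from end k.\<close>
definition corner_cw :: "('v, 'e, 'f, 'z) diagram_scheme \<Rightarrow> 'v \<Rightarrow> nat \<Rightarrow> 'f" where
  "corner_cw D v k = (if inc D v k then lreg D (sa D v k) else rreg D (sa D v k))"

definition link_diagram :: "('v, 'e, 'f, 'z) diagram_scheme \<Rightarrow> bool" where
  "link_diagram D \<longleftrightarrow>
     finite (crossings D) \<and> finite (arcs D) \<and> finite (regions D) \<and> arcs D \<noteq> {} \<and>
     (\<forall>v\<in>crossings D. \<forall>i<4. sa D v i \<in> arcs D) \<and>
     (\<forall>e\<in>arcs D. lreg D e \<in> regions D \<and> rreg D e \<in> regions D \<and> lreg D e \<noteq> rreg D e) \<and>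
     (\<forall>e\<in>arcs D.
        (\<not> (\<exists>v\<in>crossings D. \<exists>i<4. sa D v i = e)) \<or>
        ((\<exists>!p. fst p \<in> crossings D \<and> snd p < 4 \<and> sa D (fst p) (snd p) = e \<and> inc D (fst p) (snd p)) \<and>
         (\<exists>!p. fst p \<in> crossings D \<and> snd p < 4 \<and> sa D (fst p) (snd p) = e \<and> \<not> inc D (fst p) (snd p)))) \<and>
     (\<forall>v\<in>crossings D. \<forall>i<4. corner D v i = corner_cw D v (nxt i)) \<and>
     (\<forall>f\<in>regions D. \<exists>e\<in>arcs D. f = lreg D e \<or> f = rreg D e)"

text \<open>An orientation: ori e = True iff the orientation of e agrees with its reference direction;
  at each crossing, along each strand (ends 0-2 and 1-3) the orientation enters at exactly one end.\<close>
definition orientation :: "('v, 'e, 'f, 'z) diagram_scheme \<Rightarrow> ('e \<Rightarrow> bool) \<Rightarrow> bool" where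
  "orientation D ori \<longleftrightarrow>
     (\<forall>v\<in>crossings D. \<forall>i<2.
        (inc D v i = ori (sa D v i)) \<noteq> (inc D v (i + 2) = ori (sa D v (i + 2))))"

text \<open>A normal orientation n: n e = True iff the normal of e points to the right of its
  reference direction (from lreg e to rreg e).  Conditions (i) and (ii) at each crossing:
  for an end i entered by the strand (i = 0,1) the normal is right of the strand's travel
  direction iff n e = inc; for an end left by the strand (i = 2,3) iff n e = (not inc).
  The right side of the over strand (travelling 1 -> 3) is the side of end 2.\<close>
definition crossing_conds :: "('x \<Rightarrow> 'x \<Rightarrow> 'x) \<Rightarrow> ('x \<Rightarrow> 'x) \<Rightarrow> ('v, 'e, 'f, 'z) diagram_scheme
                              \<Rightarrow> ('e \<Rightarrow> bool) \<Rightarrow> ('e \<Rightarrow> 'x) \<Rightarrow> bool" where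
  "crossing_conds qop \<rho> D n l \<longleftrightarrow>
     (\<forall>v\<in>crossings D.
        let e0 = sa D v 0; e1 = sa D v 1; e2 = sa D v 2; e3 = sa D v 3;
            r0 = (n e0 = inc D v 0); r1 = (n e1 = inc D v 1);
            r2 = (n e2 = (\<not> inc D v 2)); r3 = (n e3 = (\<not> inc D v 3))
        in (if r1 = r3 then l e1 = l e3 else l e1 = \<rho> (l e3)) \<and>
           (let efrom = (if r1 then e0 else e2); eto = (if r1 then e2 else e0)
            in qop (l efrom) (l e1) = (if r0 = r2 then l eto else \<rho> (l eto))))"

definition region_cond :: "('y \<Rightarrow> 'x \<Rightarrow> 'y) \<Rightarrow> ('v, 'e, 'f, 'z) diagram_scheme
                           \<Rightarrow> ('e \<Rightarrow> bool) \<Rightarrow> ('e \<Rightarrow> 'x) \<Rightarrow> ('f \<Rightarrow> 'y) \<Rightarrow> bool" where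
  "region_cond act D n l yl \<longleftrightarrow>
     (\<forall>e\<in>arcs D. if n e then act (yl (lreg D e)) (l e) = yl (rreg D e)
                         else act (yl (rreg D e)) (l e) = yl (lreg D e))"

definition valid_rep :: "('x \<Rightarrow> 'x \<Rightarrow> 'x) \<Rightarrow> ('x \<Rightarrow> 'x) \<Rightarrow> ('v, 'e, 'f, 'z) diagram_scheme
                         \<Rightarrow> ('e \<Rightarrow> bool) \<times> ('e \<Rightarrow> 'x) \<Rightarrow> bool" where
  "valid_rep qop \<rho> D r \<longleftrightarrow>
     (\<forall>e. e \<notin> arcs D \<longrightarrow> fst r e = False \<and> snd r e = undefined) \<and>
     crossing_conds qop \<rho> D (fst r) (snd r)"

definition basic_inv :: "('x \<Rightarrow> 'x) \<Rightarrow> ('e \<Rightarrow> bool) \<times> ('e \<Rightarrow> 'x) \<Rightarrow> 'e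
                         \<Rightarrow> ('e \<Rightarrow> bool) \<times> ('e \<Rightarrow> 'x)" where
  "basic_inv \<rho> r e = ((fst r)(e := \<not> fst r e), (snd r)(e := \<rho> (snd r e)))"

definition inv_step :: "('x \<Rightarrow> 'x) \<Rightarrow> ('v, 'e, 'f, 'z) diagram_scheme
     \<Rightarrow> ((('e \<Rightarrow> bool) \<times> ('e \<Rightarrow> 'x)) \<times> (('e \<Rightarrow> bool) \<times> ('e \<Rightarrow> 'x))) set" where
  "inv_step \<rho> D = {(r, basic_inv \<rho> r e) | r e. e \<in> arcs D}"

text \<open>(X,rho)_Y-colorings: a basic-inversion class of valid assignments together with
  region labels (restricted to the regions).\<close>
definition unori_colorings :: "('x \<Rightarrow> 'x \<Rightarrow> 'x) \<Rightarrow> ('x \<Rightarrow> 'x) \<Rightarrow> ('y \<Rightarrow> 'x \<Rightarrow> 'y)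
     \<Rightarrow> ('v, 'e, 'f, 'z) diagram_scheme
     \<Rightarrow> ((('e \<Rightarrow> bool) \<times> ('e \<Rightarrow> 'x)) set \<times> ('f \<Rightarrow> 'y)) set" where
  "unori_colorings qop \<rho> act D =
     {(C, yl). C \<in> {r. valid_rep qop \<rho> D r} // ((inv_step \<rho> D)\<^sup>*) \<and>
               (\<forall>f. f \<notin> regions D \<longrightarrow> yl f = undefined) \<and>
               (\<exists>r\<in>C. region_cond act D (fst r) (snd r) yl)}"

text \<open>Weight of crossing v computed at the region counterclockwise from end k
  (between ends k and k+1): normals are inverted (labels replaced by rho) so as to point away
  from that region; the under semi-arc is the even end; epsilon = +1 iff k is even.\<close>
definition crossing_weight :: "('x \<Rightarrow> 'x) \<Rightarrow> ('y \<Rightarrow> 'x \<Rightarrow> 'x \<Rightarrow> 'a::ab_group_add)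
     \<Rightarrow> ('v, 'e, 'f, 'z) diagram_scheme \<Rightarrow> ('e \<Rightarrow> bool) \<Rightarrow> ('e \<Rightarrow> 'x) \<Rightarrow> ('f \<Rightarrow> 'y)
     \<Rightarrow> 'v \<Rightarrow> nat \<Rightarrow> 'a" where
  "crossing_weight \<rho> \<theta> D n l yl v k =
     (let j = nxt k; ek = sa D v k; ej = sa D v j;
          ak = (n ek = (\<not> inc D v k)); aj = (n ej = inc D v j);
          xk = (if ak then l ek else \<rho> (l ek)); xj = (if aj then l ej else \<rho> (l ej));
          y = yl (corner D v k)
      in if even k then \<theta> y xk xj else - \<theta> y xj xk)"

definition Phi_unori :: "('x \<Rightarrow> 'x) \<Rightarrow> ('y \<Rightarrow> 'x \<Rightarrow> 'x \<Rightarrow> 'a::ab_group_add)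
     \<Rightarrow> ('v, 'e, 'f, 'z) diagram_scheme
     \<Rightarrow> (('e \<Rightarrow> bool) \<times> ('e \<Rightarrow> 'x)) set \<times> ('f \<Rightarrow> 'y) \<Rightarrow> 'a" where
  "Phi_unori \<rho> \<theta> D C =
     (let r = (SOME r. r \<in> fst C)
      in \<Sum>v\<in>crossings D. crossing_weight \<rho> \<theta> D (fst r) (snd r) (snd C) v 0)"

text \<open>Oriented diagram: normal n e = not (ori e) (normal to the left of the orientation).\<close>
definition ori_colorings :: "('x \<Rightarrow> 'x \<Rightarrow> 'x) \<Rightarrow> ('x \<Rightarrow> 'x) \<Rightarrow> ('y \<Rightarrow> 'x \<Rightarrow> 'y)
     \<Rightarrow> ('v, 'e, 'f, 'z) diagram_scheme \<Rightarrow> ('e \<Rightarrow> bool) \<Rightarrow> (('e \<Rightarrow> 'x) \<times> ('f \<Rightarrow> 'y)) set" where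
  "ori_colorings qop \<rho> act D ori =
     {(l, yl). (\<forall>e. e \<notin> arcs D \<longrightarrow> l e = undefined) \<and>
               (\<forall>f. f \<notin> regions D \<longrightarrow> yl f = undefined) \<and>
               crossing_conds qop \<rho> D (\<lambda>e. \<not> ori e) l \<and>
               region_cond act D (\<lambda>e. \<not> ori e) l yl}"

text \<open>Oriented weight: computed at the (unique) region from which both normals point away.\<close>
definition Phi_ori :: "('x \<Rightarrow> 'x) \<Rightarrow> ('y \<Rightarrow> 'x \<Rightarrow> 'x \<Rightarrow> 'a::ab_group_add)
     \<Rightarrow> ('v, 'e, 'f, 'z) diagram_scheme \<Rightarrow> ('e \<Rightarrow> bool) \<Rightarrow> ('e \<Rightarrow> 'x) \<times> ('f \<Rightarrow> 'y) \<Rightarrow> 'a" where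
  "Phi_ori \<rho> \<theta> D ori C =
     (\<Sum>v\<in>crossings D. \<Sum>k<4.
        if ((\<not> ori (sa D v k)) = (\<not> inc D v k)) \<and> ((\<not> ori (sa D v (nxt k))) = inc D v (nxt k))
        then crossing_weight \<rho> \<theta> D (\<lambda>e. \<not> ori e) (fst C) (snd C) v k else 0)"

end

theory Submission
  imports Defs
begin

definition sel :: "('x\<Rightarrow>'x) \<Rightarrow> ('e\<Rightarrow>bool) \<Rightarrow> ('e\<Rightarrow>'x) \<Rightarrow> 'e \<Rightarrow> bool \<Rightarrow> 'x" where
  "sel \<rho> n l e b = (if n e = b then l e else \<rho> (l e))"

lemma cc_local:
 assumes rr: "\<And>x. \<rho>(\<rho> x) = x" and rq: "\<And>x y. \<rho>(qop x y) = qop (\<rho> x) y"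
   and qi: "\<And>x y z. qop x (\<rho> y) = z \<longleftrightarrow> qop z y = x"
 shows "((if r1 = r3 then l1 = l3 else l1 = \<rho> l3) \<and> qop (if r1 then l0 else l2) l1 = (if r0 = r2 then (if r1 then l2 else l0) else \<rho> (if r1 then l2 else l0))) \<longleftrightarrow> ((if r1 then l1 else \<rho> l1) = (if r3 then l3 else \<rho> l3) \<and> qop (if r0 then l0 else \<rho> l0) (if r1 then l1 else \<rho> l1) = (if r2 then l2 else \<rho> l2))"
proof -
  have inj: "\<And>a b. \<rho> a = \<rho> b \<longleftrightarrow> a = b" by (metis rr)
  have sw: "\<And>a b. a = \<rho> b \<longleftrightarrow> \<rho> a = b" by (metis rr)
  have q2: "\<And>x y z. qop (\<rho> x) y = z \<longleftrightarrow> qop x y = \<rho> z" by (metis rr rq)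
  show ?thesis
    apply (cases r0; cases r1; cases r2; cases r3)
    apply (simp_all add: inj q2 qi rr rq)
    apply (metis rr)+
    done
qed

lemma cc_sel:
 assumes rr: "\<And>x. \<rho>(\<rho> x) = x" and rq: "\<And>x y. \<rho>(qop x y) = qop (\<rho> x) y"
   and qi: "\<And>x y z. qop x (\<rho> y) = z \<longleftrightarrow> qop z y = x"
 shows "crossing_conds qop \<rho> D n l \<longleftrightarrow> (\<forall>v\<in>crossings D.
     sel \<rho> n l (sa D v 1) (inc D v 1) = sel \<rho> n l (sa D v 3) (\<not> inc D v 3) \<and>
     qop (sel \<rho> n l (sa D v 0) (inc D v 0)) (sel \<rho> n l (sa D v 1) (inc D v 1)) = sel \<rho> n l (sa D v 2) (\<not> inc D v 2))"
  unfolding crossing_conds_def Let_def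
proof (rule ball_cong[OF refl])
  fix v
  have d: "\<And>c a b. l (if c then a else b) = (if c then l a else l b)" by simp
  show "((if (n (sa D v 1) = inc D v 1) = (n (sa D v 3) = (\<not> inc D v 3)) then l (sa D v 1) = l (sa D v 3)
          else l (sa D v 1) = \<rho> (l (sa D v 3))) \<and>
         qop (l (if n (sa D v 1) = inc D v 1 then sa D v 0 else sa D v 2)) (l (sa D v 1)) =
         (if (n (sa D v 0) = inc D v 0) = (n (sa D v 2) = (\<not> inc D v 2))
          then l (if n (sa D v 1) = inc D v 1 then sa D v 2 else sa D v 0)
          else \<rho> (l (if n (sa D v 1) = inc D v 1 then sa D v 2 else sa D v 0)))) =
        (sel \<rho> n l (sa D v 1) (inc D v 1) = sel \<rho> n l (sa D v 3) (\<not> inc D v 3) \<and>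
         qop (sel \<rho> n l (sa D v 0) (inc D v 0)) (sel \<rho> n l (sa D v 1) (inc D v 1)) =
         sel \<rho> n l (sa D v 2) (\<not> inc D v 2))"
    unfolding d sel_def
    using cc_local[of \<rho> qop, OF rr rq qi, of "n (sa D v 1) = inc D v 1" "n (sa D v 3) = (\<not> inc D v 3)" "l (sa D v 1)" "l (sa D v 3)"
          "l (sa D v 0)" "l (sa D v 2)" "n (sa D v 0) = inc D v 0" "n (sa D v 2) = (\<not> inc D v 2)"]
    by simp
qed

lemma sel_not: "(\<And>x. \<rho>(\<rho> x) = x) \<Longrightarrow> sel \<rho> n l e (\<not> b) = \<rho> (sel \<rho> n l e b)"
  by (auto simp: sel_def)

lemma sel_self: "sel \<rho> n l e (n e) = l e" by (simp add: sel_def)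

lemma sel_basic_inv: "(\<And>x. \<rho>(\<rho> x) = x) \<Longrightarrow>
   sel \<rho> (fst (basic_inv \<rho> r e0)) (snd (basic_inv \<rho> r e0)) = sel \<rho> (fst r) (snd r)"
  by (auto simp: sel_def basic_inv_def fun_eq_iff)

lemma reach_sel:
  assumes "(r, r') \<in> (inv_step \<rho> D)\<^sup>*" and rr: "\<And>x. \<rho>(\<rho> x) = x"
  shows "sel \<rho> (fst r') (snd r') = sel \<rho> (fst r) (snd r)"
  using assms(1)
proof (induction rule: rtrancl_induct)
  case base then show ?case by simp
next
  case (step y z)
  then obtain e where "z = basic_inv \<rho> y e" by (auto simp: inv_step_def)
  then show ?case using step(3) sel_basic_inv[OF rr, of y e] by simp
qed

lemma reach_sym:
  assumes "(r, r') \<in> (inv_step \<rho> D)\<^sup>*" and rr: "\<And>x. \<rho>(\<rho> x) = x"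
  shows "(r', r) \<in> (inv_step \<rho> D)\<^sup>*"
  using assms(1)
proof (induction rule: rtrancl_induct)
  case base then show ?case by simp
next
  case (step y z)
  then obtain e where z: "z = basic_inv \<rho> y e" "e \<in> arcs D" by (auto simp: inv_step_def)
  have "basic_inv \<rho> z e = y" using z rr by (auto simp: basic_inv_def fun_eq_iff)
  then have "(z, y) \<in> inv_step \<rho> D" using z unfolding inv_step_def by blast
  then show ?case using step.IH by (rule converse_rtrancl_into_rtrancl)
qed

lemma reach_img:
  assumes "(r, r') \<in> (inv_step \<rho> D)\<^sup>*" and rr: "\<And>x. \<rho>(\<rho> x) = x"
  shows "(inv_step \<rho> D)\<^sup>* `` {r'} = (inv_step \<rho> D)\<^sup>* `` {r}"
  using assms reach_sym[OF assms] by (auto intro: rtrancl_trans)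

lemma flip_reach:
  assumes "finite S" "S \<subseteq> arcs D"
  shows "(r, (\<lambda>e. if e \<in> S then \<not> fst r e else fst r e, \<lambda>e. if e \<in> S then \<rho> (snd r e) else snd r e))
         \<in> (inv_step \<rho> D)\<^sup>*"
  using assms
proof (induction S rule: finite_induct)
  case empty then show ?case by simp
next
  case (insert x S)
  let ?r = "(\<lambda>e. if e \<in> S then \<not> fst r e else fst r e, \<lambda>e. if e \<in> S then \<rho> (snd r e) else snd r e)"
  have "(?r, basic_inv \<rho> ?r x) \<in> inv_step \<rho> D" using insert unfolding inv_step_def by blast
  moreover have "basic_inv \<rho> ?r x = (\<lambda>e. if e \<in> insert x S then \<not> fst r e else fst r e,
       \<lambda>e. if e \<in> insert x S then \<rho> (snd r e) else snd r e)"
    using insert by (auto simp: basic_inv_def fun_eq_iff)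
  ultimately show ?case using insert by (metis (no_types, lifting) insert_subset rtrancl.rtrancl_into_rtrancl)
qed

lemma cw_sel: "crossing_weight \<rho> \<theta> D n l yl v k =
  (if even k then \<theta> (yl (corner D v k)) (sel \<rho> n l (sa D v k) (\<not> inc D v k)) (sel \<rho> n l (sa D v (nxt k)) (inc D v (nxt k)))
   else - \<theta> (yl (corner D v k)) (sel \<rho> n l (sa D v (nxt k)) (inc D v (nxt k))) (sel \<rho> n l (sa D v k) (\<not> inc D v k)))"
  by (simp add: crossing_weight_def sel_def Let_def)

lemma region_sel:
  assumes rr: "\<And>x. \<rho>(\<rho> x) = x" and ai: "\<And>y x. act (act y x) (\<rho> x) = y"
  shows "region_cond act D n l yl \<longleftrightarrow> (\<forall>e\<in>arcs D. act (yl (lreg D e)) (sel \<rho> n l e True) = yl (rreg D e))"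
  unfolding region_cond_def sel_def
proof (rule ball_cong[OF refl])
  fix e
  have a2: "\<And>y x. act (act y (\<rho> x)) x = y" using ai rr by metis
  show "(if n e then act (yl (lreg D e)) (l e) = yl (rreg D e) else act (yl (rreg D e)) (l e) = yl (lreg D e)) =
        (act (yl (lreg D e)) (if n e = True then l e else \<rho> (l e)) = yl (rreg D e))"
    using ai a2 by (cases "n e") (auto, metis, metis)
qed

lemma four_weights:
  fixes \<theta> :: "'y \<Rightarrow> 'x \<Rightarrow> 'x \<Rightarrow> 'a::ab_group_add"
  assumes rr: "\<And>x. \<rho>(\<rho> x) = x" and ai: "\<And>y x. act (act y x) (\<rho> x) = y"
    and C2: "\<And>y x1 x2. \<theta> y x1 x2 + \<theta> (act y x1) (\<rho> x1) x2 = 0"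
    and C3: "\<And>y x1 x2. \<theta> y x1 x2 + \<theta> (act y x2) (qop x1 x2) (\<rho> x2) = 0"
    and h: "N3 = N1" "qop N0 N1 = N2" "y0 = act y3 N0" "y2 = act y1 (\<rho> N2)" "y3 = act y2 (\<rho> N3)"
  shows "\<theta> y0 (\<rho> N0) N1 = - \<theta> y3 N0 N3" "- \<theta> y1 (\<rho> N2) (\<rho> N1) = - \<theta> y3 N0 N3"
    "\<theta> y2 N2 (\<rho> N3) = - \<theta> y3 N0 N3"
proof -
  have a2: "\<And>y x. act (act y (\<rho> x)) x = y" using ai rr by metis
  have e1: "\<theta> y3 N0 N1 + \<theta> y0 (\<rho> N0) N1 = 0" using C2[of y3 N0 N1] h by simp
  show g1: "\<theta> y0 (\<rho> N0) N1 = - \<theta> y3 N0 N3" using e1 h(1) by (simp add: eq_neg_iff_add_eq_0 add.commute)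
  have y2: "act y3 N1 = y2" using h a2 by simp
  have e3: "\<theta> y3 N0 N1 + \<theta> y2 N2 (\<rho> N1) = 0" using C3[of y3 N0 N1] h y2 by simp
  show g3: "\<theta> y2 N2 (\<rho> N3) = - \<theta> y3 N0 N3" using e3 h(1) by (simp add: eq_neg_iff_add_eq_0 add.commute)
  have e2: "\<theta> y1 (\<rho> N2) (\<rho> N1) + \<theta> y2 N2 (\<rho> N1) = 0" using C2[of y1 "\<rho> N2" "\<rho> N1"] h rr by simp
  show "- \<theta> y1 (\<rho> N2) (\<rho> N1) = - \<theta> y3 N0 N3" using e2 g3 h(1)
    by (metis add.commute eq_neg_iff_add_eq_0)
qed

lemma cc_cong:
  assumes rr: "\<And>x. \<rho>(\<rho> x) = x" and rq: "\<And>x y. \<rho>(qop x y) = qop (\<rho> x) y"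
   and qi: "\<And>x y z. qop x (\<rho> y) = z \<longleftrightarrow> qop z y = x"
   and sa: "\<forall>v\<in>crossings D. \<forall>i<4. sa D v i \<in> arcs D"
   and eq: "\<forall>e\<in>arcs D. \<forall>b. sel \<rho> n l e b = sel \<rho> n' l' e b"
  shows "crossing_conds qop \<rho> D n l \<longleftrightarrow> crossing_conds qop \<rho> D n' l'"
  unfolding cc_sel[of \<rho> qop, OF rr rq qi]
proof (rule ball_cong[OF refl])
  fix v assume v: "v \<in> crossings D"
  have "\<And>i b. i < 4 \<Longrightarrow> sel \<rho> n l (sa D v i) b = sel \<rho> n' l' (sa D v i) b" using sa eq v by blast
  from this[of 0] this[of 1] this[of 2] this[of 3]
  show "(sel \<rho> n l (sa D v 1) (inc D v 1) = sel \<rho> n l (sa D v 3) (\<not> inc D v 3) \<and>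
         qop (sel \<rho> n l (sa D v 0) (inc D v 0)) (sel \<rho> n l (sa D v 1) (inc D v 1)) =
         sel \<rho> n l (sa D v 2) (\<not> inc D v 2)) =
        (sel \<rho> n' l' (sa D v 1) (inc D v 1) = sel \<rho> n' l' (sa D v 3) (\<not> inc D v 3) \<and>
         qop (sel \<rho> n' l' (sa D v 0) (inc D v 0)) (sel \<rho> n' l' (sa D v 1) (inc D v 1)) =
         sel \<rho> n' l' (sa D v 2) (\<not> inc D v 2))" by simp
qed

lemma region_cong:
  assumes rr: "\<And>x. \<rho>(\<rho> x) = x" and ai: "\<And>y x. act (act y x) (\<rho> x) = y"
   and eq: "\<forall>e\<in>arcs D. \<forall>b. sel \<rho> n l e b = sel \<rho> n' l' e b"
  shows "region_cond act D n l yl \<longleftrightarrow> region_cond act D n' l' yl"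
  unfolding region_sel[of \<rho> act, OF rr ai] using eq by auto

lemma cw_cong:
  assumes "sa D v k \<in> arcs D" "sa D v (nxt k) \<in> arcs D"
   and eq: "\<forall>e\<in>arcs D. \<forall>b. sel \<rho> n l e b = sel \<rho> n' l' e b"
  shows "crossing_weight \<rho> \<theta> D n l yl v k = crossing_weight \<rho> \<theta> D n' l' yl v k"
  unfolding cw_sel using assms by simp

lemma sum4: "(\<Sum>k<4::nat. f k) = f 0 + f 1 + f 2 + f 3"
proof -
  have L: "{..<4::nat} = {0,1,2,3}" by auto
  show ?thesis unfolding L by (simp add: add_ac)
qed

lemma ind_sum:
  assumes "(c0 = a0) \<noteq> (c2 = a2)" "(c1 = a1) \<noteq> (c3 = a3)"
  shows "(if ((\<not> a0) = (\<not> c0)) \<and> ((\<not> a1) = c1) then w else 0) +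
         (if ((\<not> a1) = (\<not> c1)) \<and> ((\<not> a2) = c2) then w else 0) +
         (if ((\<not> a2) = (\<not> c2)) \<and> ((\<not> a3) = c3) then w else 0) +
         (if ((\<not> a3) = (\<not> c3)) \<and> ((\<not> a0) = c0) then w else 0) = (w::'a::comm_monoid_add)"
  using assms by (cases a0; cases a1; cases a2; cases a3; cases c0; cases c1; simp)

theorem theorem6p7:
  fixes qop :: "'x \<Rightarrow> 'x \<Rightarrow> 'x" and \<rho> :: "'x \<Rightarrow> 'x" and act :: "'y \<Rightarrow> 'x \<Rightarrow> 'y"
    and \<theta> :: "'y \<Rightarrow> 'x \<Rightarrow> 'x \<Rightarrow> 'a::ab_group_add"
    and D :: "('v, 'e, 'f) diagram" and ori :: "'e \<Rightarrow> bool"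
  assumes "symmetric_quandle qop \<rho>"
    and "Xrho_set qop \<rho> act"
    and "two_cocycle_Qrho qop \<rho> act \<theta>"
    and "link_diagram D"
    and "orientation D ori"
  shows "\<forall>a. {C \<in> unori_colorings qop \<rho> act D. Phi_unori \<rho> \<theta> D C = a}
           \<approx> {C \<in> ori_colorings qop \<rho> act D ori. Phi_ori \<rho> \<theta> D ori C = a}"
proof -
  have Q: "quandle qop" and GI: "good_involution qop \<rho>" using assms(1) by (auto simp: symmetric_quandle_def)
  have rr: "\<And>x. \<rho>(\<rho> x) = x" using GI by (simp add: good_involution_def)
  have rq: "\<And>x y. \<rho>(qop x y) = qop (\<rho> x) y" using GI by (simp add: good_involution_def)
  have rqi: "\<And>x y. qop x (\<rho> y) = qinv qop x y" using GI by (simp add: good_involution_def)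
  have uq: "\<And>x y. \<exists>!z. qop z y = x" using Q by (simp add: quandle_def)
  have qi: "\<And>x y z. qop x (\<rho> y) = z \<longleftrightarrow> qop z y = x"
  proof -
    fix x y z
    have a: "qop (qinv qop x y) y = x" unfolding qinv_def by (rule theI'[OF uq])
    have b: "qop z y = x \<Longrightarrow> qinv qop x y = z" unfolding qinv_def by (rule the1_equality[OF uq])
    show "qop x (\<rho> y) = z \<longleftrightarrow> qop z y = x" using a b rqi by auto
  qed
  have ai: "\<And>y x. act (act y x) (\<rho> x) = y" using assms(2) by (simp add: Xrho_set_def)
  have C2: "\<And>y x1 x2. \<theta> y x1 x2 + \<theta> (act y x1) (\<rho> x1) x2 = 0"
    and C3: "\<And>y x1 x2. \<theta> y x1 x2 + \<theta> (act y x2) (qop x1 x2) (\<rho> x2) = 0"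
    using assms(3) by (simp_all add: two_cocycle_Qrho_def)
  have sa: "\<forall>v\<in>crossings D. \<forall>i<4. sa D v i \<in> arcs D" using assms(4) by (simp add: link_diagram_def)
  have cor: "\<And>v i. v\<in>crossings D \<Longrightarrow> i<4 \<Longrightarrow> corner D v i = corner_cw D v (nxt i)"
    using assms(4) by (simp add: link_diagram_def)
  have fin: "finite (arcs D)" using assms(4) by (simp add: link_diagram_def)
  have orc: "\<And>v i. v \<in> crossings D \<Longrightarrow> i < 2 \<Longrightarrow>
      (inc D v i = ori (sa D v i)) \<noteq> (inc D v (i+2) = ori (sa D v (i+2)))"
    using assms(5) by (simp add: orientation_def)
  define n0 where "n0 = (\<lambda>e. e \<in> arcs D \<and> \<not> ori e)"
  define R where "R = (inv_step \<rho> D)\<^sup>*"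
  define G where "G = (\<lambda>(l :: 'e \<Rightarrow> 'x, yl :: 'f \<Rightarrow> 'y). (R``{(n0,l)}, yl))"
  have n0eq: "\<forall>e\<in>arcs D. \<forall>b. sel \<rho> n0 l e b = sel \<rho> (\<lambda>e. \<not> ori e) l e b" for l
    by (simp add: sel_def n0_def)

  have wv: "(\<Sum>k<4. if ((\<not> ori (sa D v k)) = (\<not> inc D v k)) \<and> ((\<not> ori (sa D v (nxt k))) = inc D v (nxt k))
        then crossing_weight \<rho> \<theta> D (\<lambda>e. \<not> ori e) l yl v k else 0)
      = crossing_weight \<rho> \<theta> D (\<lambda>e. \<not> ori e) l yl v 0"
    if v: "v \<in> crossings D" and cc: "crossing_conds qop \<rho> D (\<lambda>e. \<not> ori e) l"
      and rc: "region_cond act D (\<lambda>e. \<not> ori e) l yl" for v l yl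
  proof -
    define s where "s = sel \<rho> (\<lambda>e. \<not> ori e) l"
    define N0 where "N0 = s (sa D v 0) (inc D v 0)"
    define N1 where "N1 = s (sa D v 1) (inc D v 1)"
    define N2 where "N2 = s (sa D v 2) (\<not> inc D v 2)"
    define N3 where "N3 = s (sa D v 3) (\<not> inc D v 3)"
    define y0 where "y0 = yl (corner D v 0)"
    define y1 where "y1 = yl (corner D v 1)"
    define y2 where "y2 = yl (corner D v 2)"
    define y3 where "y3 = yl (corner D v 3)"
    have sn: "\<And>e b. s e (\<not> b) = \<rho> (s e b)" by (simp add: s_def sel_not[OF rr])
    from cc v have c1: "N3 = N1" "qop N0 N1 = N2"
      unfolding cc_sel[of \<rho> qop, OF rr rq qi] s_def N0_def N1_def N2_def N3_def by auto
    have reg: "act (yl (corner_cw D v j)) (s (sa D v j) (inc D v j)) = yl (corner D v j)" if j: "j<4" for j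
    proof -
      have e: "sa D v j \<in> arcs D" using sa v j by blast
      have r: "act (yl (lreg D (sa D v j))) (s (sa D v j) True) = yl (rreg D (sa D v j))"
        using rc e unfolding region_sel[of \<rho> act, OF rr ai] s_def by blast
      show ?thesis
      proof (cases "inc D v j")
        case True then show ?thesis using r by (simp add: corner_def corner_cw_def)
      next
        case False
        have "s (sa D v j) False = \<rho> (s (sa D v j) True)" using sn[of _ True] by simp
        then show ?thesis using False r ai by (simp add: corner_def corner_cw_def) (metis ai)
      qed
    qed
    have n3: "nxt 3 = 0" "nxt 0 = 1" "nxt 1 = 2" "nxt 2 = 3" by (simp_all add: nxt_def)
    have n3b: "nxt (Suc 0) = 2" by (simp add: nxt_def)
    have cw0: "corner_cw D v 0 = corner D v 3" using cor[OF v, of 3] n3 by simp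
    have cw2: "corner_cw D v 2 = corner D v 1" using cor[OF v, of 1] n3 by simp
    have cw3: "corner_cw D v 3 = corner D v 2" using cor[OF v, of 2] n3 by simp
    have h0: "y0 = act y3 N0" using reg[of 0] cw0 by (simp add: y0_def y3_def N0_def)
    have h2: "y2 = act y1 (\<rho> N2)" using reg[of 2] cw2 sn[of "sa D v 2" "\<not> inc D v 2"]
      by (simp add: y2_def y1_def N2_def)
    have h3: "y3 = act y2 (\<rho> N3)" using reg[of 3] cw3 sn[of "sa D v 3" "\<not> inc D v 3"]
      by (simp add: y2_def y3_def N3_def)
    note fw = four_weights[of \<rho> act \<theta> qop, OF rr ai C2 C3 c1 h0 h2 h3]
    let ?cw = "crossing_weight \<rho> \<theta> D (\<lambda>e. \<not> ori e) l yl v"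
    define w where "w = - \<theta> y3 N0 N3"
    have w0: "?cw 0 = w" using fw(1) unfolding cw_sel w_def
      by (simp add: n3 n3b rr s_def[symmetric] sn N0_def N1_def y0_def)
    have w1: "?cw 1 = w" using fw(2) unfolding cw_sel w_def
      by (simp add: n3 n3b rr s_def[symmetric] sn N2_def N1_def y1_def)
    have w2: "?cw 2 = w" using fw(3) unfolding cw_sel w_def
      by (simp add: n3 n3b rr s_def[symmetric] sn N2_def N3_def y2_def)
    have w3: "?cw 3 = w" unfolding cw_sel w_def
      by (simp add: n3 n3b rr s_def[symmetric] sn N0_def N3_def y3_def)
    have o0: "(inc D v 0 = ori (sa D v 0)) \<noteq> (inc D v 2 = ori (sa D v 2))" using orc[OF v, of 0] by (simp only: add_0_left) simp
    have o1: "(inc D v 1 = ori (sa D v 1)) \<noteq> (inc D v 3 = ori (sa D v 3))" proof -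
      have t: "(1::nat)+2 = 3" by simp
      show ?thesis using orc[OF v, of 1] unfolding t by simp
    qed
    show ?thesis unfolding sum4 n3 w0 w1 w2 w3 by (rule ind_sum[OF o0 o1])
  qed
  have phi: "Phi_ori \<rho> \<theta> D ori (l,yl) = Phi_unori \<rho> \<theta> D (G (l,yl))"
    if cc: "crossing_conds qop \<rho> D (\<lambda>e. \<not> ori e) l" and rc: "region_cond act D (\<lambda>e. \<not> ori e) l yl" for l yl
  proof -
    define r where "r = (SOME r. r \<in> R``{(n0,l)})"
    have "r \<in> R``{(n0,l)}" unfolding r_def by (rule someI[of _ "(n0,l)"]) (simp add: R_def)
    then have "((n0,l), r) \<in> (inv_step \<rho> D)\<^sup>*" by (simp add: R_def)
    from reach_sel[OF this rr] have se: "sel \<rho> (fst r) (snd r) = sel \<rho> n0 l" by simp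
    have eq: "\<forall>e\<in>arcs D. \<forall>b. sel \<rho> (fst r) (snd r) e b = sel \<rho> (\<lambda>e. \<not> ori e) l e b"
      using se n0eq[of l] by simp
    have "Phi_unori \<rho> \<theta> D (G (l,yl)) = (\<Sum>v\<in>crossings D. crossing_weight \<rho> \<theta> D (fst r) (snd r) yl v 0)"
      by (simp add: Phi_unori_def G_def Let_def r_def)
    also have "\<dots> = (\<Sum>v\<in>crossings D. crossing_weight \<rho> \<theta> D (\<lambda>e. \<not> ori e) l yl v 0)"
    proof (rule sum.cong[OF refl])
      fix v assume v: "v \<in> crossings D"
      have "nxt 0 = 1" by (simp add: nxt_def)
      then show "crossing_weight \<rho> \<theta> D (fst r) (snd r) yl v 0 = crossing_weight \<rho> \<theta> D (\<lambda>e. \<not> ori e) l yl v 0"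
        using sa v eq by (intro cw_cong) auto
    qed
    also have "\<dots> = Phi_ori \<rho> \<theta> D ori (l,yl)"
      unfolding Phi_ori_def fst_conv snd_conv by (rule sum.cong[OF refl], rule wv[OF _ cc rc, symmetric])
    finally show ?thesis by simp
  qed

  have bij: "bij_betw G {C \<in> ori_colorings qop \<rho> act D ori. Phi_ori \<rho> \<theta> D ori C = a}
                     {C \<in> unori_colorings qop \<rho> act D. Phi_unori \<rho> \<theta> D C = a}" for a
    unfolding bij_betw_def
  proof (intro conjI)
    show "inj_on G {C \<in> ori_colorings qop \<rho> act D ori. Phi_ori \<rho> \<theta> D ori C = a}"
    proof (rule inj_onI)
      fix x x' assume "G x = G x'"
      obtain l yl where x: "x = (l,yl)" by (cases x)
      obtain l' yl' where x': "x' = (l',yl')" by (cases x')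
      have yy: "yl = yl'" and RR: "R``{(n0,l)} = R``{(n0,l')}" using \<open>G x = G x'\<close> by (auto simp: G_def x x')
      have "(n0,l') \<in> R``{(n0,l)}" unfolding RR by (simp add: R_def)
      then have "((n0,l),(n0,l')) \<in> (inv_step \<rho> D)\<^sup>*" by (simp add: R_def)
      from reach_sel[OF this rr] have "sel \<rho> n0 l' = sel \<rho> n0 l" by simp
      then have "l' = l" by (metis sel_self ext)
      then show "x = x'" using x x' yy by simp
    qed
  next
    show "G ` {C \<in> ori_colorings qop \<rho> act D ori. Phi_ori \<rho> \<theta> D ori C = a} =
          {C \<in> unori_colorings qop \<rho> act D. Phi_unori \<rho> \<theta> D C = a}"
    proof (rule set_eqI, rule iffI)
      fix z assume "z \<in> G ` {C \<in> ori_colorings qop \<rho> act D ori. Phi_ori \<rho> \<theta> D ori C = a}"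
      then obtain l yl where lo: "(l,yl) \<in> ori_colorings qop \<rho> act D ori" and pa: "Phi_ori \<rho> \<theta> D ori (l,yl) = a"
        and z: "z = G (l,yl)" by auto
      have lu: "\<forall>e. e \<notin> arcs D \<longrightarrow> l e = undefined" and yu: "\<forall>f. f \<notin> regions D \<longrightarrow> yl f = undefined"
        and cc: "crossing_conds qop \<rho> D (\<lambda>e. \<not> ori e) l" and rc: "region_cond act D (\<lambda>e. \<not> ori e) l yl"
        using lo by (auto simp: ori_colorings_def)
      have cc0: "crossing_conds qop \<rho> D n0 l"
        using cc cc_cong[of \<rho> qop, OF rr rq qi sa n0eq[of l]] by simp
      have rc0: "region_cond act D n0 l yl"
        using rc region_cong[of \<rho> act, OF rr ai n0eq[of l]] by simp
      have vr: "valid_rep qop \<rho> D (n0,l)" using cc0 lu by (simp add: valid_rep_def n0_def)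
      have "R``{(n0,l)} \<in> {r. valid_rep qop \<rho> D r} // ((inv_step \<rho> D)\<^sup>*)"
        unfolding R_def by (rule quotientI) (simp add: vr)
      moreover have "(n0,l) \<in> R``{(n0,l)}" by (simp add: R_def)
      ultimately have "G (l,yl) \<in> unori_colorings qop \<rho> act D"
        unfolding unori_colorings_def G_def
        apply (simp only: case_prod_conv mem_Collect_eq)
        using yu rc0 by (auto simp: Collect_mem_eq intro!: bexI[of _ "(n0,l)"])
      moreover have "Phi_unori \<rho> \<theta> D (G (l,yl)) = a" using phi[OF cc rc] pa by simp
      ultimately show "z \<in> {C \<in> unori_colorings qop \<rho> act D. Phi_unori \<rho> \<theta> D C = a}" using z by simp
    next
      fix z assume "z \<in> {C \<in> unori_colorings qop \<rho> act D. Phi_unori \<rho> \<theta> D C = a}"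
      then obtain C yl where z: "z = (C,yl)" and zu: "(C,yl) \<in> unori_colorings qop \<rho> act D"
        and pa: "Phi_unori \<rho> \<theta> D (C,yl) = a" by (cases z) auto
      have Cq: "C \<in> {r. valid_rep qop \<rho> D r} // ((inv_step \<rho> D)\<^sup>*)"
        and yu: "\<forall>f. f \<notin> regions D \<longrightarrow> yl f = undefined"
        and ex: "\<exists>r\<in>C. region_cond act D (fst r) (snd r) yl" using zu by (auto simp: unori_colorings_def)
      from Cq obtain r where Cr: "C = R``{r}" and vr: "valid_rep qop \<rho> D r"
        unfolding R_def by (rule quotientE) simp
      from ex obtain r' where r'C: "r' \<in> C" and rc': "region_cond act D (fst r') (snd r') yl" by blast
      have out: "\<forall>e. e \<notin> arcs D \<longrightarrow> fst r e = False \<and> snd r e = undefined"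
        and ccr: "crossing_conds qop \<rho> D (fst r) (snd r)" using vr by (auto simp: valid_rep_def)
      define S where "S = {e \<in> arcs D. fst r e \<noteq> n0 e}"
      define l where "l = (\<lambda>e. if e \<in> S then \<rho> (snd r e) else snd r e)"
      have finS: "finite S" and subS: "S \<subseteq> arcs D" using fin by (auto simp: S_def)
      have fl: "(\<lambda>e. if e \<in> S then \<not> fst r e else fst r e) = n0"
        using out by (auto simp: S_def fun_eq_iff n0_def)
      have reach: "(r, (n0,l)) \<in> (inv_step \<rho> D)\<^sup>*"
        using flip_reach[OF finS subS, of r \<rho>] unfolding fl l_def .
      have CR: "R``{(n0,l)} = C" unfolding Cr R_def by (rule reach_img[OF reach rr])
      have sl: "sel \<rho> n0 l = sel \<rho> (fst r) (snd r)" using reach_sel[OF reach rr] by simp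
      have eqr: "\<forall>e\<in>arcs D. \<forall>b. sel \<rho> (fst r) (snd r) e b = sel \<rho> (\<lambda>e. \<not> ori e) l e b"
        using sl n0eq[of l] by simp
      have cc: "crossing_conds qop \<rho> D (\<lambda>e. \<not> ori e) l"
        using ccr cc_cong[of \<rho> qop, OF rr rq qi sa eqr] by simp
      have "(r, r') \<in> (inv_step \<rho> D)\<^sup>*" using r'C Cr by (simp add: R_def)
      from reach_sel[OF this rr] have "sel \<rho> (fst r') (snd r') = sel \<rho> (fst r) (snd r)" .
      then have eqr': "\<forall>e\<in>arcs D. \<forall>b. sel \<rho> (fst r') (snd r') e b = sel \<rho> (\<lambda>e. \<not> ori e) l e b"
        using eqr by simp
      have rc: "region_cond act D (\<lambda>e. \<not> ori e) l yl"
        using rc' region_cong[of \<rho> act, OF rr ai eqr'] by simp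
      have lu: "\<forall>e. e \<notin> arcs D \<longrightarrow> l e = undefined" using out subS by (auto simp: l_def)
      have lo: "(l,yl) \<in> ori_colorings qop \<rho> act D ori"
        using lu yu cc rc by (simp add: ori_colorings_def)
      have Gl: "G (l,yl) = (C,yl)" using CR by (simp add: G_def)
      have "Phi_ori \<rho> \<theta> D ori (l,yl) = a" using phi[OF cc rc] Gl pa by simp
      then show "z \<in> G ` {C \<in> ori_colorings qop \<rho> act D ori. Phi_ori \<rho> \<theta> D ori C = a}"
        using lo Gl z by (metis (mono_tags, lifting) image_eqI mem_Collect_eq)
    qed
  qed
  show ?thesis
  proof
    fix a
    show "{C \<in> unori_colorings qop \<rho> act D. Phi_unori \<rho> \<theta> D C = a}
           \<approx> {C \<in> ori_colorings qop \<rho> act D ori. Phi_ori \<rho> \<theta> D ori C = a}"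
      using bij[of a] by (meson eqpoll_def eqpoll_sym)
  qed
qed

end
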